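(* Assume $r\ge2$, let $F:(\mathbb{R}^n,D)\to(\mathbb{R}^n,D)$ be an $\eta$-quasisymmetric homeomorphism, and write $F(x,y)=(H(x,y),G(y))$ for $x\in\mathbb{R}^{n_1}$, $y\in Y$ (such maps exist since $F$ maps each horizontal leaf $\mathbb{R}^{n_1}\times\{y\}$ onto a horizontal leaf). Suppose there are constants $K\ge1$ and $C>0$ such that (1) $G:(Y,D_Y)\to(Y,D_Y)$ is a $K$-quasisimilarity with constant $C$, and (2) for each $y\in Y$, $H(\cdot,y):\mathbb{R}^{n_1}\to\mathbb{R}^{n_1}$ (Euclidean metric) is a $K$-quasisimilarity with constant $C$. Then $F$ is an $(\eta(1)/\eta^{-1}(1))K$-quasisimilarity (with respect to $D$) with constant $C$.
   Context: Let $n_1,\dots,n_r\ge1$, $n=n_1+\dots+n_r$, $0<\alpha_1<\dots<\alpha_r$. For $x=(x_1,\dots,x_r)\in\mathbb{R}^n=\mathbb{R}^{n_1}\times\dots\times\mathbb{R}^{n_r}$, $D(x,y)=\max\{|x_1-y_1|,|x_2-y_2|^{\alpha_1/\alpha_2},\dots,|x_r-y_r|^{\alpha_1/\alpha_r}\}$. $Y=\mathbb{R}^{n_2}\times\dots\times\mathbb{R}^{n_r}$, $\mathbb{R}^n=\mathbb{R}^{n_1}\times Y$, $D_Y((x_2,\dots,x_r),(x_2',\dots,x_r'))=\max_{2\le i\le r}|x_i-x_i'|^{\alpha_1/\alpha_i}$. $\eta:[0,\infty)\to[0,\infty)$ is a homeomorphism; $f$ is $\eta$-quasisymmetric if $\frac{d(f(x),f(y))}{d(f(x),f(z))}\le\eta(\frac{d(x,y)}{d(x,z)})$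 for distinct $x,y,z$. A bijection $\Phi$ is a $K$-quasisimilarity with constant $C>0$ if $\frac CK d(a,b)\le d(\Phi(a),\Phi(b))\le CK\,d(a,b)$ for all $a,b$. *)

theory Defs
  imports "HOL-Analysis.Analysis"
begin

text \<open>Points of R^n = R^{n_1} x ... x R^{n_r} are encoded as functions
  x :: nat => nat => real, where x i j is the j-th coordinate (j < n i) of the
  i-th block (1 <= i <= r); all other values are 0.  Points of R^{n_1} are
  nat => real with support in {..< n 1}.\<close>

type_synonym pt = "nat \<Rightarrow> nat \<Rightarrow> real"

definition Rn :: "nat \<Rightarrow> (nat \<Rightarrow> nat) \<Rightarrow> pt set" where
  "Rn r n = {x. \<forall>i j. (i \<notin> {1..r} \<or> n i \<le> j) \<longrightarrow> x i j = 0}"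

definition Yspace :: "nat \<Rightarrow> (nat \<Rightarrow> nat) \<Rightarrow> pt set" where
  "Yspace r n = {y. \<forall>i j. (i \<notin> {2..r} \<or> n i \<le> j) \<longrightarrow> y i j = 0}"

definition R1 :: "(nat \<Rightarrow> nat) \<Rightarrow> (nat \<Rightarrow> real) set" where
  "R1 n = {a. \<forall>j. n 1 \<le> j \<longrightarrow> a j = 0}"

definition blockdist :: "(nat \<Rightarrow> nat) \<Rightarrow> pt \<Rightarrow> pt \<Rightarrow> nat \<Rightarrow> real" where
  "blockdist n x y i = sqrt (\<Sum>j<n i. (x i j - y i j)^2)"

definition eucl1 :: "(nat \<Rightarrow> nat) \<Rightarrow> (nat \<Rightarrow> real) \<Rightarrow> (nat \<Rightarrow> real) \<Rightarrow> real" where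
  "eucl1 n a b = sqrt (\<Sum>j<n 1. (a j - b j)^2)"

definition Dmet :: "nat \<Rightarrow> (nat \<Rightarrow> nat) \<Rightarrow> (nat \<Rightarrow> real) \<Rightarrow> pt \<Rightarrow> pt \<Rightarrow> real" where
  "Dmet r n \<alpha> x y = Max ((\<lambda>i. blockdist n x y i powr (\<alpha> 1 / \<alpha> i)) ` {1..r})"

definition DY :: "nat \<Rightarrow> (nat \<Rightarrow> nat) \<Rightarrow> (nat \<Rightarrow> real) \<Rightarrow> pt \<Rightarrow> pt \<Rightarrow> real" where
  "DY r n \<alpha> x y = Max ((\<lambda>i. blockdist n x y i powr (\<alpha> 1 / \<alpha> i)) ` {2..r})"

definition ypart :: "pt \<Rightarrow> pt" where
  "ypart x = x(1 := (\<lambda>_. 0))"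

definition combine :: "(nat \<Rightarrow> real) \<Rightarrow> pt \<Rightarrow> pt" where
  "combine a y = y(1 := a)"

definition quasisymmetric ::
  "'a set \<Rightarrow> ('a \<Rightarrow> 'a \<Rightarrow> real) \<Rightarrow> (real \<Rightarrow> real) \<Rightarrow> ('a \<Rightarrow> 'a) \<Rightarrow> bool" where
  "quasisymmetric S d \<eta> f \<longleftrightarrow>
     (\<forall>x\<in>S. \<forall>y\<in>S. \<forall>z\<in>S. x \<noteq> y \<and> x \<noteq> z \<and> y \<noteq> z \<longrightarrow>
        d (f x) (f y) / d (f x) (f z) \<le> \<eta> (d x y / d x z))"

definition metric_continuous_on :: "'a set \<Rightarrow> ('a \<Rightarrow> 'a \<Rightarrow> real) \<Rightarrow> ('a \<Rightarrow> 'a) \<Rightarrow> bool" where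
  "metric_continuous_on S d f \<longleftrightarrow>
     (\<forall>x\<in>S. \<forall>e>0. \<exists>\<delta>>0. \<forall>y\<in>S. d x y < \<delta> \<longrightarrow> d (f x) (f y) < e)"

definition metric_homeomorphism :: "'a set \<Rightarrow> ('a \<Rightarrow> 'a \<Rightarrow> real) \<Rightarrow> ('a \<Rightarrow> 'a) \<Rightarrow> bool" where
  "metric_homeomorphism S d f \<longleftrightarrow> bij_betw f S S \<and> metric_continuous_on S d f
     \<and> metric_continuous_on S d (inv_into S f)"

definition quasisimilarity ::
  "'a set \<Rightarrow> ('a \<Rightarrow> 'a \<Rightarrow> real) \<Rightarrow> real \<Rightarrow> real \<Rightarrow> ('a \<Rightarrow> 'a) \<Rightarrow> bool" where
  "quasisimilarity S d K C f \<longleftrightarrow> bij_betw f S S \<and>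
     (\<forall>a\<in>S. \<forall>b\<in>S. C / K * d a b \<le> d (f a) (f b) \<and> d (f a) (f b) \<le> C * K * d a b)"

end

theory Submission
  imports Defs
begin


lemma blockdist_nonneg: "blockdist n p q i \<ge> 0"
  by (simp add: blockdist_def sum_nonneg)

lemma eucl1_nonneg: "eucl1 n a b \<ge> 0"
  by (simp add: eucl1_def sum_nonneg)

lemma eucl1_self[simp]: "eucl1 n a a = 0"
  by (simp add: eucl1_def)

lemma DY_nonneg: assumes "r \<ge> 2" shows "DY r n \<alpha> p q \<ge> 0"
proof -
  have "blockdist n p q 2 powr (\<alpha> 1 / \<alpha> 2) \<le> DY r n \<alpha> p q"
    unfolding DY_def using assms by (intro Max_ge) auto
  moreover have "blockdist n p q 2 powr (\<alpha> 1 / \<alpha> 2) \<ge> 0" by simp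
  ultimately show ?thesis by linarith
qed

lemma DY_self[simp]: assumes "r \<ge> 2" shows "DY r n \<alpha> p p = 0"
proof -
  have "(\<lambda>i. blockdist n p p i powr (\<alpha> 1 / \<alpha> i)) ` {2..r} = {0}"
    using assms by (auto simp: blockdist_def)
  thus ?thesis by (simp add: DY_def)
qed

lemma DY_cong: assumes "\<And>i. i \<ge> 2 \<Longrightarrow> p i = p' i" "\<And>i. i \<ge> 2 \<Longrightarrow> q i = q' i"
  shows "DY r n \<alpha> p q = DY r n \<alpha> p' q'"
  unfolding DY_def blockdist_def using assms
  by (intro arg_cong[where f=Max] image_cong) auto

lemma Dmet_eq: assumes "r \<ge> 2" "\<alpha> 1 > 0"
  shows "Dmet r n \<alpha> p q = max (eucl1 n (p 1) (q 1)) (DY r n \<alpha> p q)"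
proof -
  have e: "{1..r} = insert 1 {2..r}" using assms by auto
  have b: "blockdist n p q 1 powr (\<alpha> 1 / \<alpha> 1) = eucl1 n (p 1) (q 1)"
    using assms by (simp add: blockdist_def eucl1_def sum_nonneg)
  show ?thesis unfolding Dmet_def DY_def e image_insert
    using assms b by (subst Max_insert) auto
qed

lemma Dmet_self: assumes "r \<ge> 2" "\<alpha> 1 > 0" shows "Dmet r n \<alpha> p p = 0"
  using Dmet_eq[where r=r and \<alpha>=\<alpha>, OF assms] assms by simp

lemma sumsq_zero: assumes "sqrt (\<Sum>j<(m::nat). (f j - g j)^2) = (0::real)" "j < m"
  shows "f j = g j"
proof -
  have "(\<Sum>j<m. (f j - g j)^2) = 0" using assms(1) by simp
  hence "\<forall>j\<in>{..<m}. (f j - g j)^2 = 0" using sum_nonneg_eq_0_iff[OF finite_lessThan[of m], where f="\<lambda>j. (f j - g j)^2"] by auto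
  thus ?thesis using assms(2) by auto
qed

lemma Dmet_zero: assumes "r \<ge> 2" "\<alpha> 1 > 0" "a \<in> Rn r n" "b \<in> Rn r n"
  "Dmet r n \<alpha> a b = 0" shows "a = b"
proof (intro ext)
  fix i j
  have e1: "eucl1 n (a 1) (b 1) = 0" and dy: "DY r n \<alpha> a b = 0"
    using assms Dmet_eq[where r=r and \<alpha>=\<alpha>, OF assms(1,2), of n a b] eucl1_nonneg[of n "a 1" "b 1"]
      DY_nonneg[OF assms(1), of n \<alpha> a b] by auto
  show "a i j = b i j"
  proof (cases "i \<in> {1..r} \<and> j < n i")
    case False thus ?thesis using assms(3,4) by (auto simp: Rn_def not_less)
  next
    case True
    show ?thesis
    proof (cases "i = 1")
      case True
      thus ?thesis using e1 \<open>i \<in> {1..r} \<and> j < n i\<close> sumsq_zero unfolding eucl1_def by blast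
    next
      case False
      hence i2: "i \<in> {2..r}" using True by auto
      have "blockdist n a b i powr (\<alpha> 1 / \<alpha> i) \<le> DY r n \<alpha> a b"
        unfolding DY_def using i2 by (intro Max_ge) auto
      hence "blockdist n a b i powr (\<alpha> 1 / \<alpha> i) = 0" using dy
        by (smt (verit) powr_ge_zero)
      hence "blockdist n a b i = 0" by simp
      thus ?thesis using True sumsq_zero unfolding blockdist_def by blast
    qed
  qed
qed

lemma decomp: assumes "p \<in> Rn r n"
  shows "p 1 \<in> R1 n" "ypart p \<in> Yspace r n" "combine (p 1) (ypart p) = p"
  using assms by (auto simp: Rn_def R1_def Yspace_def ypart_def combine_def)

lemma combine_Rn: assumes "r \<ge> 1" "a \<in> R1 n" "y \<in> Yspace r n"
  shows "combine a y \<in> Rn r n"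
  using assms by (auto simp: Rn_def R1_def Yspace_def combine_def)

lemma combine_simps: "combine a y 1 = a" "i \<noteq> 1 \<Longrightarrow> combine a y i = y i"
  by (auto simp: combine_def)

lemma eucl1_shift: assumes "n 1 \<ge> 1"
  shows "eucl1 n x (x(0 := x 0 + t)) = \<bar>t\<bar>"
proof -
  have "(\<Sum>j<n 1. (x j - (x(0 := x 0 + t)) j)^2) = (\<Sum>j<n 1. if j = 0 then t^2 else 0)"
    by (intro sum.cong) auto
  also have "\<dots> = t^2" using assms by (simp add: sum.delta)
  finally show ?thesis by (simp add: eucl1_def)
qed


theorem lemma4p7:
  fixes r :: nat and n :: "nat \<Rightarrow> nat" and \<alpha> :: "nat \<Rightarrow> real"
    and \<eta> \<eta>inv :: "real \<Rightarrow> real"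
    and F :: "pt \<Rightarrow> pt" and H :: "(nat \<Rightarrow> real) \<Rightarrow> pt \<Rightarrow> (nat \<Rightarrow> real)"
    and G :: "pt \<Rightarrow> pt" and K C :: real
  assumes r2: "r \<ge> 2"
    and npos: "\<forall>i\<in>{1..r}. n i \<ge> 1"
    and alpha_pos: "0 < \<alpha> 1"
    and alpha_mono: "\<forall>i\<in>{1..r}. \<forall>j\<in>{1..r}. i < j \<longrightarrow> \<alpha> i < \<alpha> j"
    and eta: "homeomorphism {0..} {0..} \<eta> \<eta>inv"
    and Fhomeo: "metric_homeomorphism (Rn r n) (Dmet r n \<alpha>) F"
    and Fqs: "quasisymmetric (Rn r n) (Dmet r n \<alpha>) \<eta> F"
    and Fform: "\<forall>a\<in>R1 n. \<forall>y\<in>Yspace r n. F (combine a y) = combine (H a y) (G y)"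
    and K: "K \<ge> 1" and C: "C > 0"
    and Gqs: "quasisimilarity (Yspace r n) (DY r n \<alpha>) K C G"
    and Hqs: "\<forall>y\<in>Yspace r n. quasisimilarity (R1 n) (eucl1 n) K C (\<lambda>a. H a y)"
  shows "quasisimilarity (Rn r n) (Dmet r n \<alpha>) (\<eta> 1 / \<eta>inv 1 * K) C F"
proof -
  define D where "D = Dmet r n \<alpha>"
  define R where "R = Rn r n"
  define sh where "sh = (\<lambda>(p::pt) (t::real). p(1 := (p 1)(0 := p 1 0 + t)))"
  have r1: "r \<ge> 1" using r2 by simp
  have n1: "n 1 \<ge> 1" using npos r1 by auto
  have bij: "bij_betw F R R" using Fhomeo unfolding metric_homeomorphism_def R_def by simp
  have FR: "F p \<in> R" if "p \<in> R" for p using bij that by (simp add: bij_betwE)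
  have Finj: "F p \<noteq> F q" if "p \<in> R" "q \<in> R" "p \<noteq> q" for p q
    using bij that unfolding bij_betw_def inj_on_def by blast
  have Dnn: "D p q \<ge> 0" for p q
    unfolding D_def Dmet_eq[where r=r and \<alpha>=\<alpha>, OF r2 alpha_pos] using eucl1_nonneg[of n "p 1" "q 1"] by simp
  have Dpos: "D p q > 0" if "p \<in> R" "q \<in> R" "p \<noteq> q" for p q
    using Dnn[of p q] Dmet_zero[where r=r and \<alpha>=\<alpha>, OF r2 alpha_pos, where a=p and b=q] that unfolding D_def R_def
    by fastforce
  have qs: "D (F a) (F b) / D (F a) (F c) \<le> \<eta> (D a b / D a c)"
    if "a \<in> R" "b \<in> R" "c \<in> R" "a \<noteq> b" "a \<noteq> c" "b \<noteq> c" for a b c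
    using Fqs that unfolding quasisymmetric_def D_def R_def by blast
  have shR: "sh p t \<in> R" and sh1: "sh p t 1 \<in> R1 n" and shy: "ypart (sh p t) = ypart p"
    and shD: "D p (sh p t) = \<bar>t\<bar>" if "p \<in> R" for p t
  proof -
    have p1: "p 1 \<in> R1 n" using decomp[of p r n] that R_def by auto
    show s1: "sh p t 1 \<in> R1 n" using p1 n1 unfolding sh_def R1_def by auto
    show sy: "ypart (sh p t) = ypart p" unfolding sh_def ypart_def by auto
    have "sh p t = combine (sh p t 1) (ypart (sh p t))"
      unfolding sh_def combine_def ypart_def by auto
    thus "sh p t \<in> R" using combine_Rn[OF r1 s1, of "ypart p"] sy decomp(2)[of p r n] that R_def
      by simp
    have "DY r n \<alpha> p (sh p t) = DY r n \<alpha> p p" by (rule DY_cong) (auto simp: sh_def)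
    thus "D p (sh p t) = \<bar>t\<bar>" unfolding D_def Dmet_eq[where r=r and \<alpha>=\<alpha>, OF r2 alpha_pos]
      using eucl1_shift[where n=n, OF n1, of "p 1" t] r2 by (simp add: sh_def)
  qed
  have Fsh: "C/K*t \<le> D (F p) (F (sh p t)) \<and> D (F p) (F (sh p t)) \<le> C*K*t"
    if "p \<in> R" "t > 0" for p t
  proof -
    define y where "y = ypart p"
    define x' where "x' = sh p t 1"
    have p1: "p 1 \<in> R1 n" and yY: "y \<in> Yspace r n" and pc: "combine (p 1) y = p"
      using decomp[of p r n] that R_def y_def by auto
    have x'R: "x' \<in> R1 n" using sh1 that x'_def by auto
    have sc: "combine x' y = sh p t" using decomp(3)[of "sh p t" r n] shR[OF that(1)] shy[OF that(1)]
      unfolding x'_def y_def R_def by simp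
    have Fp: "F p = combine (H (p 1) y) (G y)" using Fform p1 yY pc by metis
    have Fs: "F (sh p t) = combine (H x' y) (G y)" using Fform x'R yY sc by metis
    have "DY r n \<alpha> (F p) (F (sh p t)) = DY r n \<alpha> (G y) (G y)"
      unfolding Fp Fs by (rule DY_cong) (auto simp: combine_simps)
    hence "D (F p) (F (sh p t)) = eucl1 n (H (p 1) y) (H x' y)"
      unfolding D_def Dmet_eq[where r=r and \<alpha>=\<alpha>, OF r2 alpha_pos] using r2 eucl1_nonneg
      by (simp add: Fp Fs combine_def)
    moreover have "eucl1 n (p 1) x' = t"
      using eucl1_shift[where n=n, OF n1, of "p 1" t] that unfolding x'_def sh_def by simp
    moreover have "C / K * eucl1 n (p 1) x' \<le> eucl1 n (H (p 1) y) (H x' y) \<and>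
        eucl1 n (H (p 1) y) (H x' y) \<le> C * K * eucl1 n (p 1) x'"
      using Hqs yY p1 x'R unfolding quasisimilarity_def by blast
    ultimately show ?thesis by simp
  qed
  have etaim: "\<eta> ` {0..} = {0..}" and etainv: "\<And>x. x \<ge> 0 \<Longrightarrow> \<eta>inv (\<eta> x) = x"
    and etainv2: "\<And>y. y \<ge> 0 \<Longrightarrow> \<eta> (\<eta>inv y) = y" and etainvim: "\<eta>inv ` {0..} = {0..}"
    and etacont: "continuous_on {0..} \<eta>"
    using eta unfolding homeomorphism_def by auto
  have eta1nn: "\<eta> 1 \<ge> 0" using etaim by auto
  have eta1: "\<eta> 1 \<ge> 1"
  proof -
    define p0 :: pt where "p0 = (\<lambda>_ _. 0)"
    have p0R: "p0 \<in> R" unfolding p0_def R_def Rn_def by simp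
    define q0 where "q0 = sh p0 1"
    define s0 where "s0 = sh p0 (-1)"
    have q0R: "q0 \<in> R" and s0R: "s0 \<in> R" using shR p0R q0_def s0_def by auto
    have dq: "D p0 q0 = 1" and ds: "D p0 s0 = 1" using shD p0R q0_def s0_def by auto
    have pq: "p0 \<noteq> q0" and ps: "p0 \<noteq> s0" using dq ds D_def Dmet_self[where r=r and \<alpha>=\<alpha>, OF r2 alpha_pos] by auto
    have qs0: "q0 \<noteq> s0"
    proof
      assume "q0 = s0" hence "q0 1 0 = s0 1 0" by simp
      thus False unfolding q0_def s0_def sh_def p0_def by simp
    qed
    define A where "A = D (F p0) (F q0)"
    define B where "B = D (F p0) (F s0)"
    have A: "A > 0" unfolding A_def using Dpos FR Finj p0R q0R pq by auto
    have B: "B > 0" unfolding B_def using Dpos FR Finj p0R s0R ps by auto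
    have "A / B \<le> \<eta> 1" using qs[OF p0R q0R s0R pq ps qs0] dq ds A_def B_def by simp
    hence 1: "A \<le> \<eta> 1 * B" using B by (simp add: divide_le_eq)
    have "B / A \<le> \<eta> 1" using qs[OF p0R s0R q0R ps pq qs0[symmetric]] dq ds A_def B_def by simp
    hence 2: "B \<le> \<eta> 1 * A" using A by (simp add: divide_le_eq)
    have "A \<le> \<eta> 1 * (\<eta> 1 * A)" using 1 2 eta1nn by (meson mult_left_mono order_trans)
    hence "1 * A \<le> (\<eta> 1 * \<eta> 1) * A" by (simp add: mult.assoc)
    hence "1 \<le> \<eta> 1 * \<eta> 1" using A by (meson mult_le_cancel_right_pos)
    thus ?thesis using eta1nn by (smt (verit) mult_le_cancel_left1 mult_right_mono)
  qed
  have inj: "inj_on \<eta> {0..}" using etainv by (metis atLeast_iff inj_on_inverseI)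
  have "strict_mono_on {0..} \<eta> \<or> strict_antimono_on {0..} \<eta>"
    using injective_eq_monotone_map[of "{0..}" \<eta>] inj etacont is_interval_ci by blast
  moreover have "\<not> strict_antimono_on {0..} \<eta>"
  proof
    assume am: "strict_antimono_on {0..} \<eta>"
    have "\<eta> 0 + 1 \<in> \<eta> ` {0..}" using etaim eta1nn etaim by (metis atLeast_iff image_eqI
        add_nonneg_nonneg etaim zero_le_one order_refl)
    then obtain z where z: "z \<ge> 0" "\<eta> z = \<eta> 0 + 1" by auto
    show False
    proof (cases "z = 0")
      case True thus False using z by simp
    next
      case False hence "\<eta> z < \<eta> 0" using am z unfolding monotone_on_def
        by (metis atLeast_iff order_le_less order_refl)
      thus False using z by simp
    qed
  qed
  ultimately have sm: "strict_mono_on {0..} \<eta>" by blast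
  have eta0: "\<eta> 0 = 0"
  proof -
    obtain z where z: "z \<ge> 0" "\<eta> z = 0" using etaim by (metis atLeast_iff imageE order_refl)
    have "\<eta> 0 \<ge> 0" using etaim by auto
    moreover have "\<eta> 0 \<le> \<eta> z" using sm z
      by (metis atLeast_iff order_refl order_le_less strict_mono_onD)
    ultimately show ?thesis using z by simp
  qed
  define u where "u = \<eta>inv 1"
  have u0: "u \<ge> 0" using etainvim u_def by auto
  have ueta: "\<eta> u = 1" using etainv2 u_def by simp
  have upos: "u > 0" using u0 ueta eta0 by (cases "u = 0") auto
  have ule: "u \<le> 1"
  proof (rule ccontr)
    assume "\<not> u \<le> 1"
    hence "\<eta> 1 < \<eta> u" using sm by (simp add: strict_mono_onD)
    thus False using ueta eta1 by simp
  qed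
  have main: "C / (\<eta> 1 / u * K) * D a b \<le> D (F a) (F b) \<and>
      D (F a) (F b) \<le> C * (\<eta> 1 / u * K) * D a b" if aR: "a \<in> R" and bR: "b \<in> R" for a b
  proof (cases "a = b")
    case True thus ?thesis using Dmet_self[where r=r and \<alpha>=\<alpha>, OF r2 alpha_pos] D_def by simp
  next
    case False
    define d where "d = D a b"
    have d: "d > 0" using Dpos aR bR False d_def by auto
    define s where "s = sh a d"
    have sR: "s \<in> R" using shR aR s_def by auto
    have ds: "D a s = d" using shD aR s_def d by auto
    have as: "a \<noteq> s" using ds d D_def Dmet_self[where r=r and \<alpha>=\<alpha>, OF r2 alpha_pos] by auto
    define A where "A = D (F a) (F b)"
    define B where "B = D (F a) (F s)"
    have Bb: "C/K*d \<le> B \<and> B \<le> C*K*d" using Fsh aR d B_def s_def by auto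
    have A: "A > 0" unfolding A_def using Dpos FR Finj aR bR False by auto
    have B: "B > 0" unfolding B_def using Dpos FR Finj aR sR as by auto
    have key: "C/K*d \<le> \<eta> 1 * A \<and> A \<le> \<eta> 1 * (C*K*d)"
    proof (cases "b = s")
      case True
      hence "A = B" using A_def B_def by simp
      thus ?thesis using Bb eta1 A B
        by (smt (verit) mult_le_cancel_right1 mult_right_mono mult.commute)
    next
      case bs: False
      have "A / B \<le> \<eta> 1" using qs[OF aR bR sR False as bs] ds d A_def B_def d_def by simp
      hence 1: "A \<le> \<eta> 1 * B" using B by (simp add: divide_le_eq)
      have "B / A \<le> \<eta> 1" using qs[OF aR sR bR as False bs[symmetric]] ds d A_def B_def d_def
        by simp
      hence 2: "B \<le> \<eta> 1 * A" using A by (simp add: divide_le_eq)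
      have "\<eta> 1 * B \<le> \<eta> 1 * (C*K*d)" using Bb eta1nn by (simp add: mult_left_mono)
      thus ?thesis using 1 2 Bb by linarith
    qed
    have e1p: "\<eta> 1 > 0" using eta1 by simp
    have Kp: "K > 0" using K by simp
    have lo: "C / (\<eta> 1 / u * K) * d \<le> A"
    proof -
      have "C / (\<eta> 1 / u * K) * d = u * (C/K*d) / \<eta> 1" using upos e1p Kp
        by (simp add: field_simps)
      also have "\<dots> \<le> (C/K*d) / \<eta> 1"
        using ule C Kp d e1p u0 by (intro divide_right_mono mult_left_le_one_le) auto
      also have "\<dots> \<le> A" using key e1p by (metis pos_divide_le_eq mult.commute)
      finally show ?thesis .
    qed
    have hi: "A \<le> C * (\<eta> 1 / u * K) * d"
    proof -
      have "\<eta> 1 * (C*K*d) = (C*K*d) * \<eta> 1" by simp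
      also have "\<dots> \<le> (C*K*d) * (\<eta> 1 / u)"
        using ule upos e1p C Kp d by (intro mult_left_mono) (auto simp: le_divide_eq)
      also have "\<dots> = C * (\<eta> 1 / u * K) * d" by simp
      finally show ?thesis using key by linarith
    qed
    show ?thesis using lo hi A_def d_def by simp
  qed
  show ?thesis unfolding quasisimilarity_def
    using bij main unfolding u_def R_def D_def by blast
qed

end
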